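(* Let $P_X$ be a probability distribution on a context space $\mathcal{X}$, $\mathcal{A}$ a finite action set, $\pi_0$ a logging policy with $\pi_0(a|x)>0$ for all $(x,a)$, and $\pi_\theta$ a fixed policy with $w_m=\sup_{(x,a)\in\mathcal{X}\times\mathcal{A}}\pi_\theta(a|x)/\pi_0(a|x)<\infty$. Let $f_r:\mathcal{X}\times\mathcal{A}\to[-1,0]$ be a reward function. Let $S=(x_i,a_i,p_i,r_i)_{i=1}^n$ where $(x_i,a_i)$ are i.i.d. from $P_X\otimes\pi_0(A|X)$, $p_i=\pi_0(a_i|x_i)$ and $r_i=f_r(x_i,a_i)$, and let $\hat{R}(\pi_\theta,S)=\frac1n\sum_{i=1}^n r_i\frac{\pi_\theta(a_i|x_i)}{p_i}$. Then for every $\delta\in(0,1)$, with probability at least $1-\delta$ over the draw of $S$, $$R(\pi_\theta)\le \hat{R}(\pi_\theta,S)+\frac{w_m\log(1/\delta)}{3n}+\sqrt{\frac{\bigl(w_m\sqrt{2\min(D(\pi_\theta\|\pi_0),D_r(\pi_\theta\|\pi_0))}+2\bigr)\log(1/\delta)}{n}}.$$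
   Context: A policy is a conditional distribution $\pi(a|x)$ over $\mathcal{A}$ given $x$. The true risk is $R(\pi)=\mathbb{E}_{X\sim P_X}[\mathbb{E}_{A\sim\pi(\cdot|X)}[f_r(X,A)]]$. Conditional KL: $D(\pi_\theta\|\pi_0)=\int_{\mathcal{X}}\sum_a\pi_\theta(a|x)\log\frac{\pi_\theta(a|x)}{\pi_0(a|x)}\,dP_X(x)$; reverse conditional KL: $D_r(\pi_\theta\|\pi_0)=\int_{\mathcal{X}}\sum_a\pi_0(a|x)\log\frac{\pi_0(a|x)}{\pi_\theta(a|x)}\,dP_X(x)$ (possibly $+\infty$). *)

theory Defs
  imports "HOL-Probability.Probability"
begin

text \<open>A policy is represented as q x a = q(a|x); actions range over a finite type 'a.\<close>

definition is_policy :: "'x measure \<Rightarrow> ('x \<Rightarrow> 'a::finite \<Rightarrow> real) \<Rightarrow> bool" where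
  "is_policy P q \<longleftrightarrow> (\<forall>a. (\<lambda>x. q x a) \<in> borel_measurable P) \<and>
     (\<forall>x\<in>space P. (\<forall>a. q x a \<ge> 0) \<and> (\<Sum>a\<in>UNIV. q x a) = 1)"

definition joint :: "'x measure \<Rightarrow> ('x \<Rightarrow> 'a::finite \<Rightarrow> real) \<Rightarrow> ('x \<times> 'a) measure" where
  "joint P pi0 = density (P \<Otimes>\<^sub>M count_space UNIV) (\<lambda>(x,a). ennreal (pi0 x a))"

definition risk :: "'x measure \<Rightarrow> ('x \<Rightarrow> 'a::finite \<Rightarrow> real) \<Rightarrow> ('x \<Rightarrow> 'a \<Rightarrow> real) \<Rightarrow> real" where
  "risk P fr q = (\<integral>x. (\<Sum>a\<in>UNIV. q x a * fr x a) \<partial>P)"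

definition cond_KL :: "'x measure \<Rightarrow> ('x \<Rightarrow> 'a::finite \<Rightarrow> real) \<Rightarrow> ('x \<Rightarrow> 'a \<Rightarrow> real) \<Rightarrow> ennreal" where
  "cond_KL P q pi0 = (\<integral>\<^sup>+x. ennreal (\<Sum>a\<in>UNIV. (if q x a = 0 then 0 else q x a * ln (q x a / pi0 x a))) \<partial>P)"

definition rev_cond_KL :: "'x measure \<Rightarrow> ('x \<Rightarrow> 'a::finite \<Rightarrow> real) \<Rightarrow> ('x \<Rightarrow> 'a \<Rightarrow> real) \<Rightarrow> ennreal" where
  "rev_cond_KL P q pi0 = (\<integral>\<^sup>+x.
     (if \<exists>a. pi0 x a > 0 \<and> q x a = 0 then \<infinity>
      else ennreal (\<Sum>a\<in>UNIV. (if pi0 x a = 0 then 0 else pi0 x a * ln (pi0 x a / q x a)))) \<partial>P)"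

definition emp_risk :: "nat \<Rightarrow> ('x \<Rightarrow> 'a \<Rightarrow> real) \<Rightarrow> ('x \<Rightarrow> 'a \<Rightarrow> real) \<Rightarrow> ('x \<Rightarrow> 'a \<Rightarrow> real)
     \<Rightarrow> (nat \<Rightarrow> 'x \<times> 'a) \<Rightarrow> real" where
  "emp_risk n fr q pi0 S = (1 / real n) * (\<Sum>i<n. fr (fst (S i)) (snd (S i)) * q (fst (S i)) (snd (S i)) / pi0 (fst (S i)) (snd (S i)))"

end

theory Submission
  imports Defs
begin


lemma exp_le_quad_neg:
  fixes y :: real assumes "y \<le> 0" shows "exp y \<le> 1 + y + y\<^sup>2 / 2"
proof (cases "y = 0")
  case True then show ?thesis by simp
next
  case False
  from Maclaurin_exp_lt[OF False, of 3] obtain t where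
    "exp y = (\<Sum>m<3. y ^ m / fact m) + exp t / fact 3 * y ^ 3" by auto
  moreover have "y ^ 3 \<le> 0" using assms by (simp add: power_le_zero_eq_numeral)
  moreover have "exp t / fact 3 * y ^ 3 \<le> 0"
    by (rule mult_nonneg_nonpos) (use calculation(2) in simp_all)
  ultimately show ?thesis by (simp add: numeral_3_eq_3 power2_eq_square)
qed

lemma exp_bern_aux:
  fixes y :: real assumes "0 \<le> y" shows "exp y * (6 - 2*y) \<le> 6 + 4*y + y\<^sup>2"
proof -
  define h where "h = (\<lambda>y::real. (6 + 4*y + y\<^sup>2) * exp (-y) - (6 - 2*y))"
  have "h 0 \<le> h y"
  proof (rule DERIV_nonneg_imp_nondecreasing[OF assms])
    fix x :: real assume x: "0 \<le> x" "x \<le> y"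
    have "DERIV h x :> ((4 + 2*x) * exp (-x) - (6 + 4*x + x\<^sup>2) * exp (-x) + 2)"
      unfolding h_def by (auto intro!: derivative_eq_intros simp: power2_eq_square algebra_simps)
    moreover have "(4 + 2*x) * exp (-x) - (6 + 4*x + x\<^sup>2) * exp (-x) + 2 \<ge> 0"
    proof -
      have "1 + x + x\<^sup>2/2 \<le> exp x" using exp_lower_Taylor_quadratic x by auto
      hence "(2 + 2*x + x\<^sup>2) * exp (-x) \<le> 2 * exp x * exp (-x)"
        by (intro mult_right_mono) auto
      also have "\<dots> = 2" by (simp add: exp_minus field_simps)
      finally show ?thesis by (simp add: algebra_simps)
    qed
    ultimately show "\<exists>d. DERIV h x :> d \<and> 0 \<le> d" by blast
  qed
  hence "0 \<le> (6 + 4*y + y\<^sup>2) * exp (-y) - (6 - 2*y)" by (simp add: h_def)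
  hence "(6 - 2*y) * exp y \<le> (6 + 4*y + y\<^sup>2) * exp (-y) * exp y"
    by (intro mult_right_mono) auto
  also have "\<dots> = 6 + 4*y + y\<^sup>2" by (simp add: exp_minus)
  finally show ?thesis by (simp add: mult.commute)
qed

lemma exp_bern:
  fixes l b u :: real
  assumes "0 \<le> l" "0 \<le> b" "l * b < 3" "u \<le> b"
  shows "exp (l*u) \<le> 1 + l*u + l\<^sup>2 * u\<^sup>2 / (2 * (1 - l*b/3))"
proof -
  have d: "1 - l*b/3 > 0" using assms by simp
  have d1: "1 - l*b/3 \<le> 1" using assms by simp
  show ?thesis
  proof (cases "l*u \<le> 0")
    case True
    have "exp (l*u) \<le> 1 + l*u + (l*u)\<^sup>2/2" by (rule exp_le_quad_neg[OF True])
    also have "(l*u)\<^sup>2/2 \<le> (l*u)\<^sup>2 / (2 * (1 - l*b/3))"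
      using d d1 by (intro divide_left_mono) (auto simp: mult.commute)
    also have "\<dots> = l\<^sup>2 * u\<^sup>2 / (2 * (1 - l*b/3))" by (simp add: power_mult_distrib)
    finally show ?thesis by simp
  next
    case False
    define y where "y = l*u"
    have y0: "0 \<le> y" using False y_def by simp
    have ylb: "y \<le> l*b" using assms by (simp add: y_def mult_left_mono)
    have y3: "6 - 2*y > 0" using ylb assms by simp
    have "exp y \<le> (6 + 4*y + y\<^sup>2) / (6 - 2*y)"
      using exp_bern_aux[OF y0] y3 by (simp add: pos_le_divide_eq)
    also have "\<dots> = 1 + y + y\<^sup>2 / (2 * (1 - y/3))"
      using y3 by (simp add: field_simps power2_eq_square)
    also have "y\<^sup>2 / (2 * (1 - y/3)) \<le> y\<^sup>2 / (2 * (1 - l*b/3))"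
      using d ylb by (intro divide_left_mono mult_pos_pos) auto
    finally show ?thesis by (simp add: y_def power_mult_distrib)
  qed
qed

lemma ln_two_ineq:
  fixes t :: real assumes "0 < t"
  shows "(1 \<le> t \<longrightarrow> 2*(t-1)/(t+1) \<le> ln t) \<and> (t \<le> 1 \<longrightarrow> ln t \<le> 2*(t-1)/(t+1))"
proof -
  define k where "k = (\<lambda>t::real. ln t - 2*(t-1)/(t+1))"
  have D: "\<exists>d. DERIV k x :> d \<and> 0 \<le> d" if "0 < x" for x
  proof -
    have "DERIV k x :> (1/x - 4/(x+1)\<^sup>2)"
      unfolding k_def using that
      by (auto intro!: derivative_eq_intros simp: power2_eq_square field_simps)
    moreover have "0 \<le> 1/x - 4/(x+1)\<^sup>2"
    proof -
      have "(x+1)\<^sup>2 - 4*x = (x-1)\<^sup>2" by (simp add: power2_eq_square algebra_simps)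
      hence "4*x \<le> (x+1)\<^sup>2" using zero_le_power2[of "x-1"] by linarith
      hence "4/(x+1)\<^sup>2 \<le> 1/x" using that by (simp add: field_simps)
      thus ?thesis by simp
    qed
    ultimately show ?thesis by blast
  qed
  have k1: "k 1 = 0" by (simp add: k_def)
  have "1 \<le> t \<longrightarrow> k 1 \<le> k t"
    using DERIV_nonneg_imp_nondecreasing[of 1 t k] D by auto
  moreover have "t \<le> 1 \<longrightarrow> k t \<le> k 1"
    using DERIV_nonneg_imp_nondecreasing[of t 1 k] D assms by auto
  ultimately show ?thesis using k1 by (auto simp: k_def)
qed

lemma pinsker_t:
  fixes t :: real assumes "0 < t"
  shows "3*(t-1)\<^sup>2 \<le> (2*t+4)*(t * ln t - t + 1)"
proof -
  define g where "g = (\<lambda>t::real. (2*t+4)*(t * ln t - t + 1) - 3*(t-1)\<^sup>2)"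
  have D: "DERIV g x :> 4*((x+1) * ln x - 2*(x-1))" if "0 < x" for x
    unfolding g_def using that
    by (auto intro!: derivative_eq_intros simp: power2_eq_square field_simps)
  have g1: "g 1 = 0" by (simp add: g_def)
  have "0 \<le> g t"
  proof (cases "1 \<le> t")
    case True
    have "g 1 \<le> g t"
    proof (rule DERIV_nonneg_imp_nondecreasing[OF True])
      fix x :: real assume x: "1 \<le> x" "x \<le> t"
      hence "2*(x-1)/(x+1) \<le> ln x" using ln_two_ineq[of x] by auto
      hence "2*(x-1) \<le> (x+1) * ln x" using x by (simp add: field_simps)
      thus "\<exists>d. DERIV g x :> d \<and> 0 \<le> d" using D[of x] x by (intro exI[of _ "4*((x+1) * ln x - 2*(x-1))"]) auto
    qed
    thus ?thesis using g1 by simp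
  next
    case False
    have "g t \<ge> g 1"
    proof (rule DERIV_nonpos_imp_nonincreasing[of t 1 g])
      show "t \<le> 1" using False by simp
      fix x :: real assume x: "t \<le> x" "x \<le> 1"
      hence x0: "0 < x" using assms by simp
      hence "ln x \<le> 2*(x-1)/(x+1)" using ln_two_ineq[of x] x by auto
      hence "(x+1) * ln x \<le> 2*(x-1)" using x0 by (simp add: field_simps)
      thus "\<exists>d. DERIV g x :> d \<and> d \<le> 0" using D[OF x0] by (intro exI[of _ "4*((x+1) * ln x - 2*(x-1))"]) auto
    qed
    thus ?thesis using g1 by simp
  qed
  thus ?thesis by (simp add: g_def)
qed

lemma pinsker_pq:
  fixes p q :: real assumes "0 < p" "0 < q"
  shows "3*(p-q)\<^sup>2 \<le> (2*p+4*q)*(p * ln (p/q) - p + q)"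
proof -
  define t where "t = p/q"
  have t: "0 < t" using assms by (simp add: t_def)
  have p: "p = q*t" using assms by (simp add: t_def)
  have "q\<^sup>2 * (3*(t-1)\<^sup>2) \<le> q\<^sup>2 * ((2*t+4)*(t * ln t - t + 1))"
    using pinsker_t[OF t] by (intro mult_left_mono) auto
  thus ?thesis unfolding p using assms by (simp add: power2_eq_square algebra_simps)
qed

lemma pinsker_fin:
  fixes p q :: "'a::finite \<Rightarrow> real"
  assumes q: "\<And>a. 0 < q a" and p: "\<And>a. 0 \<le> p a"
    and sp: "(\<Sum>a\<in>UNIV. p a) = 1" and sq: "(\<Sum>a\<in>UNIV. q a) = 1"
  shows "(\<Sum>a\<in>UNIV. \<bar>p a - q a\<bar>)\<^sup>2 \<le> 2 * (\<Sum>a\<in>UNIV. (if p a = 0 then 0 else p a * ln (p a / q a)))"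
proof -
  define A where "A = (\<lambda>a. (2 * p a + 4 * q a) / 3)"
  define B where "B = (\<lambda>a. (if p a = 0 then 0 else p a * ln (p a / q a)) - p a + q a)"
  have AB: "(p a - q a)\<^sup>2 \<le> A a * B a" "0 \<le> A a" "0 \<le> B a" for a
  proof -
    show "0 \<le> A a" using p[of a] q[of a] by (simp add: A_def)
    show "(p a - q a)\<^sup>2 \<le> A a * B a"
    proof (cases "p a = 0")
      case True thus ?thesis using q[of a] by (simp add: A_def B_def power2_eq_square)
    next
      case False
      hence "0 < p a" using p[of a] by simp
      from pinsker_pq[OF this q[of a]] False show ?thesis by (simp add: A_def B_def)
    qed
    show "0 \<le> B a"
    proof (cases "p a = 0")
      case True thus ?thesis using q[of a] by (simp add: B_def)
    next
      case False
      hence pa: "0 < p a" using p[of a] by simp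
      have "0 \<le> 3*(p a - q a)\<^sup>2" by simp
      also have "\<dots> \<le> (2*p a+4*q a)*(p a * ln (p a/q a) - p a + q a)" by (rule pinsker_pq[OF pa q])
      finally have "0 \<le> (2*p a+4*q a)*(p a * ln (p a/q a) - p a + q a)" .
      moreover have "0 < 2*p a+4*q a" using pa q[of a] by simp
      ultimately have "0 \<le> p a * ln (p a/q a) - p a + q a" by (simp add: zero_le_mult_iff)
      thus ?thesis using False by (simp add: B_def)
    qed
  qed
  have "(\<Sum>a\<in>UNIV. \<bar>p a - q a\<bar>) \<le> (\<Sum>a\<in>UNIV. sqrt (A a) * sqrt (B a))"
  proof (rule sum_mono)
    fix a
    have "\<bar>p a - q a\<bar> = sqrt ((p a - q a)\<^sup>2)" by simp
    also have "\<dots> \<le> sqrt (A a * B a)" using AB(1) by (rule real_sqrt_le_mono)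
    finally show "\<bar>p a - q a\<bar> \<le> sqrt (A a) * sqrt (B a)" by (simp add: real_sqrt_mult)
  qed
  hence "(\<Sum>a\<in>UNIV. \<bar>p a - q a\<bar>)\<^sup>2 \<le> (\<Sum>a\<in>UNIV. sqrt (A a) * sqrt (B a))\<^sup>2"
    by (intro power_mono) (auto intro: sum_nonneg)
  also have "\<dots> \<le> (\<Sum>a\<in>UNIV. (sqrt (A a))\<^sup>2) * (\<Sum>a\<in>UNIV. (sqrt (B a))\<^sup>2)"
    by (rule Cauchy_Schwarz_ineq_sum)
  also have "\<dots> = (\<Sum>a\<in>UNIV. A a) * (\<Sum>a\<in>UNIV. B a)" using AB by simp
  also have "(\<Sum>a\<in>UNIV. A a) = 2" unfolding A_def sum_divide_distrib[symmetric] sum.distrib sum_distrib_left[symmetric] using sp sq by simp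
  also have "(\<Sum>a\<in>UNIV. B a) = (\<Sum>a\<in>UNIV. (if p a = 0 then 0 else p a * ln (p a / q a)))"
    using sp sq by (simp add: B_def sum.distrib sum_subtractf)
  finally show ?thesis .
qed



lemma mgf_bound:
  assumes P: "prob_space E" and Zm[measurable]: "Z \<in> borel_measurable E"
    and bnd: "\<forall>s\<in>space E. \<bar>Z s\<bar> \<le> B"
    and up: "\<forall>s\<in>space E. \<mu> - Z s \<le> b" and mu: "\<mu> = integral\<^sup>L E Z"
    and b: "0 \<le> b" and l: "0 \<le> l" "l*b < 3"
    and var: "(\<integral>s. (Z s - \<mu>)\<^sup>2 \<partial>E) \<le> v"
  shows "(\<integral>\<^sup>+s. ennreal (exp (l * (\<mu> - Z s))) \<partial>E) \<le> ennreal (exp (l\<^sup>2 * v / (2*(1 - l*b/3))))"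
proof -
  interpret prob_space E by fact
  define d where "d = 2*(1 - l*b/3)"
  have d: "0 < d" using l by (simp add: d_def mult.commute)
  define g where "g = (\<lambda>s. 1 + l*(\<mu> - Z s) + l\<^sup>2 * (\<mu> - Z s)\<^sup>2 / d)"
  have iZ: "integrable E Z"
    by (rule integrable_const_bound[where B=B]) (use bnd in auto)
  have iZ2: "integrable E (\<lambda>s. (Z s - \<mu>)\<^sup>2)"
  proof (rule integrable_const_bound[where B="(B + \<bar>\<mu>\<bar>)\<^sup>2"])
    show "AE x in E. norm ((Z x - \<mu>)\<^sup>2) \<le> (B + \<bar>\<mu>\<bar>)\<^sup>2"
    proof (rule AE_I2)
      fix x assume "x \<in> space E"
      hence "\<bar>Z x - \<mu>\<bar> \<le> B + \<bar>\<mu>\<bar>" using bnd by auto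
      hence "\<bar>Z x - \<mu>\<bar>\<^sup>2 \<le> (B + \<bar>\<mu>\<bar>)\<^sup>2" by (intro power_mono) auto
      thus "norm ((Z x - \<mu>)\<^sup>2) \<le> (B + \<bar>\<mu>\<bar>)\<^sup>2" by simp
    qed
  qed simp
  have pt: "exp (l * (\<mu> - Z s)) \<le> g s" if "s \<in> space E" for s
    using exp_bern[OF l(1) b l(2), of "\<mu> - Z s"] up that by (simp add: g_def d_def)
  have ig: "integrable E g"
    unfolding g_def
    using iZ iZ2 by (auto intro!: integrable_add integrable_diff integrable_mult_right integrable_divide simp: power2_commute)
  have "(\<integral>\<^sup>+s. ennreal (exp (l * (\<mu> - Z s))) \<partial>E) \<le> (\<integral>\<^sup>+s. ennreal (g s) \<partial>E)"
    by (intro nn_integral_mono ennreal_leI) (use pt in auto)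
  also have "\<dots> = ennreal (integral\<^sup>L E g)"
  proof (rule nn_integral_eq_integral[OF ig])
    show "AE x in E. 0 \<le> g x" using pt by (intro AE_I2) (smt (verit) exp_gt_zero)
  qed
  also have "integral\<^sup>L E g = 1 + l * (\<mu> - \<mu>) + l\<^sup>2 * (\<integral>s. (Z s - \<mu>)\<^sup>2 \<partial>E) / d"
  proof -
    have "integral\<^sup>L E g = (\<integral>s. 1 + l*(\<mu> - Z s) \<partial>E) + (\<integral>s. l\<^sup>2 * (Z s - \<mu>)\<^sup>2 / d \<partial>E)"
      unfolding g_def using iZ iZ2
      by (subst Bochner_Integration.integral_add[symmetric]) (auto intro!: integrable_add integrable_diff simp: power2_commute)
    also have "(\<integral>s. 1 + l*(\<mu> - Z s) \<partial>E) = 1 + l * (\<mu> - \<mu>)"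
      using iZ mu by (simp add: Bochner_Integration.integral_add Bochner_Integration.integral_diff prob_space)
    also have "(\<integral>s. l\<^sup>2 * (Z s - \<mu>)\<^sup>2 / d \<partial>E) = l\<^sup>2 * (\<integral>s. (Z s - \<mu>)\<^sup>2 \<partial>E) / d"
      by simp
    finally show ?thesis .
  qed
  also have "\<dots> \<le> 1 + l\<^sup>2 * v / d"
    using var d by (simp add: divide_right_mono mult_left_mono)
  also have "\<dots> \<le> exp (l\<^sup>2 * v / d)" by (rule exp_ge_add_one_self)
  finally show ?thesis by (simp add: d_def ennreal_leI)
qed

lemma aux_alg: "(0::real) < u \<Longrightarrow> x * ((s / u)\<^sup>2 * v / (2 * (1 / u))) = s\<^sup>2 * (x * v) / (2 * u)"
  by (simp add: power2_eq_square field_simps)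

lemma bernstein_PiM:
  assumes P: "prob_space E" and Zm[measurable]: "Z \<in> borel_measurable E"
    and bnd: "\<forall>s\<in>space E. \<bar>Z s\<bar> \<le> B"
    and up: "\<forall>s\<in>space E. \<mu> - Z s \<le> b" and mu: "\<mu> = integral\<^sup>L E Z"
    and b: "0 \<le> b"
    and var: "(\<integral>s. (Z s - \<mu>)\<^sup>2 \<partial>E) \<le> v" and v: "0 < v" and L: "0 < L" and n: "1 \<le> n"
  shows "measure (PiM {..<n} (\<lambda>_. E))
     {S \<in> space (PiM {..<n} (\<lambda>_. E)). sqrt (2 * real n * v * L) + b * L / 3 \<le> (\<Sum>i<n. \<mu> - Z (S i))}
     \<le> exp (-L)"
proof -
  interpret E: prob_space E by fact
  interpret PP: product_prob_space "\<lambda>_. E" "{..<n}"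
    by (simp add: product_prob_space_def product_prob_space_axioms_def product_sigma_finite_def
        E.prob_space_axioms E.sigma_finite_measure_axioms)
  let ?M = "PiM {..<n} (\<lambda>_. E)"
  define V where "V = real n * v"
  have V: "0 < V" using n v by (simp add: V_def)
  define cc where "cc = b / 3"
  have cc: "0 \<le> cc" using b by (simp add: cc_def)
  define s where "s = sqrt (2 * L / V)"
  have s: "0 < s" using L V by (simp add: s_def)
  define l where "l = s / (1 + cc * s)"
  have cs: "0 < 1 + cc * s" using cc s by (smt (verit) mult_nonneg_nonneg)
  have l: "0 \<le> l" using s cs by (simp add: l_def)
  have lb: "l * b < 3"
  proof -
    have "l * b = 3 * (cc * s / (1 + cc * s))" by (simp add: l_def cc_def field_simps)
    also have "cc * s / (1 + cc * s) < 1" using cs by (simp add: divide_less_eq)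
    hence "3 * (cc * s / (1 + cc * s)) < 3" by simp
    finally show ?thesis .
  qed
  define T where "T = sqrt (2 * real n * v * L) + b * L / 3"
  define f where "f = (\<lambda>S. \<Sum>i<n. \<mu> - Z (S i))"
  have "emeasure ?M {S \<in> space ?M. T \<le> f S}
      \<le> ennreal (exp (-l * T)) * (\<integral>\<^sup>+S. ennreal (exp (l * f S)) * indicator (space ?M) S \<partial>?M)"
    using l s cs by (intro Chernoff_ineq_nn_integral_ge) (auto simp: f_def l_def)
  also have "(\<integral>\<^sup>+S. ennreal (exp (l * f S)) * indicator (space ?M) S \<partial>?M)
      = (\<integral>\<^sup>+S. (\<Prod>i\<in>{..<n}. ennreal (exp (l * (\<mu> - Z (S i))))) \<partial>?M)"
    by (intro nn_integral_cong) (simp add: f_def sum_distrib_left exp_sum prod_ennreal)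
  also have "\<dots> = (\<Prod>i\<in>{..<n}. (\<integral>\<^sup>+x. ennreal (exp (l * (\<mu> - Z x))) \<partial>E))"
    by (rule PP.product_nn_integral_prod) auto
  finally have ch: "emeasure ?M {S \<in> space ?M. T \<le> f S}
      \<le> ennreal (exp (-l * T)) * (\<Prod>i\<in>{..<n}. (\<integral>\<^sup>+x. ennreal (exp (l * (\<mu> - Z x))) \<partial>E))" .
  have "ennreal (exp (-l * T)) * (\<Prod>i\<in>{..<n}. (\<integral>\<^sup>+x. ennreal (exp (l * (\<mu> - Z x))) \<partial>E))
     \<le> ennreal (exp (-l * T)) * (\<Prod>i\<in>{..<n}. ennreal (exp (l\<^sup>2 * v / (2*(1 - l*b/3)))))"
    by (intro mult_left_mono prod_mono_ennreal mgf_bound[OF P Zm bnd up mu b l lb var]) auto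
  also have "ennreal (exp (-l * T)) * (\<Prod>i\<in>{..<n}. ennreal (exp (l\<^sup>2 * v / (2*(1 - l*b/3))))) = ennreal (exp (-l * T) * exp (l\<^sup>2 * v / (2*(1 - l*b/3))) ^ n)"
    by (simp add: ennreal_mult ennreal_power)
  also have "exp (-l * T) * exp (l\<^sup>2 * v / (2*(1 - l*b/3))) ^ n = exp (-l * T + real n * (l\<^sup>2 * v / (2*(1 - l*b/3))))"
    by (simp only: exp_add exp_of_nat_mult[symmetric] mult.commute)
  also have "-l * T + real n * (l\<^sup>2 * v / (2*(1 - l*b/3))) = -L"
  proof -
    have s2: "s\<^sup>2 * V = 2 * L" using L V by (simp add: s_def)
    have sT: "s * sqrt (2 * V * L) = 2 * L"
    proof -
      have "s * sqrt (2 * V * L) = sqrt (2 * L / V * (2 * V * L))" by (simp only: s_def real_sqrt_mult)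
      also have "2 * L / V * (2 * V * L) = (2*L)\<^sup>2" using V by (simp add: field_simps power2_eq_square)
      finally show ?thesis using L by (simp only: real_sqrt_abs)
    qed
    have T: "T = sqrt (2 * V * L) + cc * L" by (simp add: T_def V_def cc_def mult.assoc)
    have d: "1 - l*b/3 = 1 / (1 + cc * s)" using cs by (simp add: l_def cc_def field_simps)
    have "real n * (l\<^sup>2 * v / (2*(1 - l*b/3))) = s\<^sup>2 * V / (2 * (1 + cc * s))"
      unfolding d unfolding l_def V_def by (rule aux_alg[OF cs])
    also have "\<dots> = L / (1 + cc * s)" unfolding s2 by (rule mult_divide_mult_cancel_left) simp
    finally have 1: "real n * (l\<^sup>2 * v / (2*(1 - l*b/3))) = L / (1 + cc * s)" .
    have 2: "l * T = (2*L + cc * s*L) / (1 + cc * s)"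
      unfolding T l_def using sT by (simp add: field_simps)
    show ?thesis unfolding 1 using 2 cs by (simp add: field_simps)
  qed
  finally have X: "emeasure ?M {S \<in> space ?M. T \<le> f S} \<le> ennreal (exp (-L))" using ch by simp
  show ?thesis using X
    by (simp add: PP.P.emeasure_eq_measure T_def f_def)
qed



lemma meas2:
  fixes f :: "'x \<Rightarrow> 'a::finite \<Rightarrow> real"
  assumes "\<And>a. (\<lambda>x. f x a) \<in> borel_measurable P"
  shows "(\<lambda>(x,a). f x a) \<in> borel_measurable (P \<Otimes>\<^sub>M count_space (UNIV::'a set))"
proof -
  have [measurable]: "(\<lambda>x. f x b) \<in> borel_measurable P" for b by (rule assms)
  have e: "(\<lambda>(x,a). f x a) = (\<lambda>z. \<Sum>b\<in>UNIV. (if snd z = b then f (fst z) b else 0))"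
    by (auto simp: fun_eq_iff if_distrib sum.delta)
  show ?thesis unfolding e by measurable
qed

lemma joint_facts:
  fixes P :: "'x measure" and pi0 :: "'x \<Rightarrow> 'a::finite \<Rightarrow> real"
  assumes PP: "prob_space P" and pol: "is_policy P pi0"
  shows "prob_space (joint P pi0)"
    and "space (joint P pi0) = space P \<times> UNIV"
    and "sets (joint P pi0) = sets (P \<Otimes>\<^sub>M count_space UNIV)"
    and "\<And>(g :: 'x \<times> 'a \<Rightarrow> real) B. g \<in> borel_measurable (P \<Otimes>\<^sub>M count_space UNIV) \<Longrightarrow> (\<forall>x\<in>space P. \<forall>a. \<bar>g (x,a)\<bar> \<le> B) \<Longrightarrow>
           integral\<^sup>L (joint P pi0) g = (\<integral>x. (\<Sum>a\<in>UNIV. pi0 x a * g (x,a)) \<partial>P)"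
proof -
  interpret P: prob_space P by fact
  interpret C: sigma_finite_measure "count_space (UNIV::'a set)"
    by (rule sigma_finite_measure_count_space_finite) simp
  interpret PC: pair_sigma_finite P "count_space (UNIV::'a set)" ..
  have pm[measurable]: "\<And>a. (\<lambda>x. pi0 x a) \<in> borel_measurable P"
    and pn: "\<And>x a. x \<in> space P \<Longrightarrow> 0 \<le> pi0 x a"
    and ps: "\<And>x. x \<in> space P \<Longrightarrow> (\<Sum>a\<in>UNIV. pi0 x a) = 1"
    using pol by (auto simp: is_policy_def)
  have p1: "pi0 x a \<le> 1" if "x \<in> space P" for x a
  proof -
    have "pi0 x a \<le> (\<Sum>a\<in>UNIV. pi0 x a)" by (rule member_le_sum) (use pn that in auto)
    thus ?thesis using ps that by simp
  qed
  have pim: "(\<lambda>(x,a). pi0 x a) \<in> borel_measurable (P \<Otimes>\<^sub>M count_space UNIV)"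
    by (rule meas2) (rule pm)
  have jd: "joint P pi0 = density (P \<Otimes>\<^sub>M count_space UNIV) (\<lambda>z. ennreal ((\<lambda>(x,a). pi0 x a) z))"
    by (simp add: joint_def split_beta')
  show sp: "space (joint P pi0) = space P \<times> UNIV"
    by (simp add: joint_def space_pair_measure)
  show "sets (joint P pi0) = sets (P \<Otimes>\<^sub>M count_space UNIV)"
    by (simp add: joint_def)
  show "prob_space (joint P pi0)"
  proof (rule prob_spaceI)
    have "emeasure (joint P pi0) (space (joint P pi0)) =
        (\<integral>\<^sup>+z. ennreal ((\<lambda>(x,a). pi0 x a) z) \<partial>(P \<Otimes>\<^sub>M count_space UNIV))"
      unfolding jd using pim
      by (subst emeasure_density) (auto intro!: nn_integral_cong simp: space_pair_measure)
    also have "\<dots> = (\<integral>\<^sup>+x. \<integral>\<^sup>+a. ennreal (pi0 x a) \<partial>count_space UNIV \<partial>P)"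
      using pim by (subst C.nn_integral_fst[symmetric]) auto
    also have "\<dots> = (\<integral>\<^sup>+x. 1 \<partial>P)"
      by (intro nn_integral_cong) (simp add: nn_integral_count_space_finite ps pn sum_ennreal)
    also have "\<dots> = 1" by (simp add: P.emeasure_space_1)
    finally show "emeasure (joint P pi0) (space (joint P pi0)) = 1" .
  qed
  fix g :: "'x \<times> 'a \<Rightarrow> real" and B :: real assume gm[measurable]: "g \<in> borel_measurable (P \<Otimes>\<^sub>M count_space UNIV)"
    and gb: "\<forall>x\<in>space P. \<forall>a. \<bar>g (x,a)\<bar> \<le> B"
  have "integral\<^sup>L (joint P pi0) g = (\<integral>z. (\<lambda>(x,a). pi0 x a) z *\<^sub>R g z \<partial>(P \<Otimes>\<^sub>M count_space UNIV))"
    unfolding jd using pim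
    by (subst integral_density) (auto simp: space_pair_measure pn)
  also have "\<dots> = (\<integral>x. (\<integral>a. pi0 x a * g (x,a) \<partial>count_space UNIV) \<partial>P)"
  proof -
    interpret PCF: finite_measure "P \<Otimes>\<^sub>M count_space (UNIV::'a set)"
    proof (rule finite_measureI)
      have "emeasure (P \<Otimes>\<^sub>M count_space (UNIV::'a set)) (space P \<times> UNIV) = emeasure P (space P) * emeasure (count_space (UNIV::'a set)) UNIV"
        by (rule C.emeasure_pair_measure_Times) auto
      thus "emeasure (P \<Otimes>\<^sub>M count_space (UNIV::'a set)) (space (P \<Otimes>\<^sub>M count_space (UNIV::'a set))) \<noteq> \<infinity>"
        by (simp add: space_pair_measure P.emeasure_space_1 emeasure_count_space_finite)
    qed
    have int: "integrable (P \<Otimes>\<^sub>M count_space UNIV) (\<lambda>z. (case z of (x, a) \<Rightarrow> pi0 x a) *\<^sub>R g z)"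
    proof (rule PCF.integrable_const_bound[where B=B])
      show "AE z in P \<Otimes>\<^sub>M count_space UNIV. norm ((case z of (x, a) \<Rightarrow> pi0 x a) *\<^sub>R g z) \<le> B"
      proof (rule AE_I2)
        fix z assume "z \<in> space (P \<Otimes>\<^sub>M count_space (UNIV::'a set))"
        then obtain x a where z: "z = (x,a)" "x \<in> space P" by (auto simp: space_pair_measure)
        have "\<bar>pi0 x a\<bar> * \<bar>g (x,a)\<bar> \<le> 1 * B"
          using p1[OF z(2)] pn[OF z(2)] gb z(2) by (intro mult_mono) auto
        thus "norm ((case z of (x, a) \<Rightarrow> pi0 x a) *\<^sub>R g z) \<le> B" using z by (simp add: abs_mult)
      qed
    qed (use pim in simp)
    from PC.integral_fst'[OF int] show ?thesis by simp
  qed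
  also have "\<dots> = (\<integral>x. (\<Sum>a\<in>UNIV. pi0 x a * g (x,a)) \<partial>P)"
    by (simp add: lebesgue_integral_count_space_finite)
  finally show "integral\<^sup>L (joint P pi0) g = (\<integral>x. (\<Sum>a\<in>UNIV. pi0 x a * g (x,a)) \<partial>P)" .
qed



lemma sqrt_n_aux: "0 < n \<Longrightarrow> 0 \<le> X \<Longrightarrow> real n * sqrt (X / real n) = sqrt (real n * X)"
proof -
  assume n: "0 < n" and X: "0 \<le> X"
  have "sqrt (real n * X) = sqrt ((real n)\<^sup>2 * (X / real n))" using n by (simp add: power2_eq_square)
  also have "\<dots> = real n * sqrt (X / real n)" by (subst real_sqrt_mult) simp
  finally show ?thesis by simp
qed

lemma chi_term:
  fixes p q f W :: real
  assumes q: "0 < q" and p: "0 \<le> p" and f: "-1 \<le> f" "f \<le> 0" and W: "p / q \<le> W"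
  shows "q * (f * p / q)\<^sup>2 \<le> p + W * (\<bar>p - q\<bar> + (p - q)) / 2"
proof -
  have e1: "q * (f * p / q)\<^sup>2 = f\<^sup>2 * (p * (p / q))" using q by (simp add: power2_eq_square field_simps)
  have h: "0 \<le> p * (p / q)" using p q by simp
  have f1: "f\<^sup>2 \<le> 1" using f by (simp add: abs_square_le_1)
  have "f\<^sup>2 * (p * (p / q)) \<le> p * (p / q)" by (rule mult_left_le_one_le[OF h _ f1]) simp
  also have "p * (p / q) = p + (p - q) * (p / q)" using q by (simp add: field_simps)
  also have "(p - q) * (p / q) \<le> W * (\<bar>p - q\<bar> + (p - q)) / 2"
  proof (cases "q \<le> p")
    case True
    have "(p - q) * (p / q) \<le> (p - q) * W" using True W by (intro mult_left_mono) auto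
    moreover have "\<bar>p - q\<bar> = p - q" using True by simp
    hence "W * (\<bar>p - q\<bar> + (p - q)) / 2 = (p - q) * W" by (simp add: field_simps)
    ultimately show ?thesis by linarith
  next
    case False
    have "(p - q) * (p / q) \<le> 0" using False p q by (intro mult_nonpos_nonneg) auto
    thus ?thesis using False by simp
  qed
  finally show ?thesis using e1 by simp
qed

theorem theorem1:
  fixes P :: "'x measure" and pi0 pith fr :: "'x \<Rightarrow> 'a::finite \<Rightarrow> real"
    and n :: nat and \<delta> :: real
  assumes "prob_space P"
    and "is_policy P pi0" and "\<forall>x\<in>space P. \<forall>a. pi0 x a > 0"
    and "is_policy P pith"
    and "bdd_above ((\<lambda>(x,a). pith x a / pi0 x a) ` (space P \<times> UNIV))"
    and "\<forall>x\<in>space P. \<forall>a. -1 \<le> fr x a \<and> fr x a \<le> 0"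
    and "\<forall>a. (\<lambda>x. fr x a) \<in> borel_measurable P"
    and "n \<ge> 1"
    and "0 < \<delta>" and "\<delta> < 1"
  shows "measure (PiM {..<n} (\<lambda>_. joint P pi0))
           {S \<in> space (PiM {..<n} (\<lambda>_. joint P pi0)).
              risk P fr pith \<le> emp_risk n fr pith pi0 S
                + (SUP (x,a)\<in>space P \<times> UNIV. pith x a / pi0 x a) * ln (1 / \<delta>) / (3 * real n)
                + sqrt (((SUP (x,a)\<in>space P \<times> UNIV. pith x a / pi0 x a)
                          * sqrt (2 * enn2real (min (cond_KL P pith pi0) (rev_cond_KL P pith pi0))) + 2)
                         * ln (1 / \<delta>) / real n)}
         \<ge> 1 - \<delta>"
proof -
  interpret P: prob_space P by fact
  have p0m[measurable]: "(\<lambda>x. pi0 x a) \<in> borel_measurable P" for a using assms(2) by (simp add: is_policy_def)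
  have ptm[measurable]: "(\<lambda>x. pith x a) \<in> borel_measurable P" for a using assms(4) by (simp add: is_policy_def)
  have frm[measurable]: "(\<lambda>x. fr x a) \<in> borel_measurable P" for a using assms(7) by simp
  have ptn: "\<And>x a. x \<in> space P \<Longrightarrow> 0 \<le> pith x a" and pts: "\<And>x. x \<in> space P \<Longrightarrow> (\<Sum>a\<in>UNIV. pith x a) = 1"
    using assms(4) by (auto simp: is_policy_def)
  have p0n: "\<And>x a. x \<in> space P \<Longrightarrow> 0 \<le> pi0 x a" and p0s: "\<And>x. x \<in> space P \<Longrightarrow> (\<Sum>a\<in>UNIV. pi0 x a) = 1"
    using assms(2) by (auto simp: is_policy_def)
  have pos: "\<And>x a. x \<in> space P \<Longrightarrow> 0 < pi0 x a" using assms(3) by auto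
  have frb: "\<And>x a. x \<in> space P \<Longrightarrow> -1 \<le> fr x a \<and> fr x a \<le> 0" using assms(6) by auto
  have pt1: "pith x a \<le> 1" if "x \<in> space P" for x a
  proof -
    have "pith x a \<le> (\<Sum>a\<in>UNIV. pith x a)" by (rule member_le_sum) (use ptn that in auto)
    thus ?thesis using pts that by simp
  qed
  define W where "W = (SUP (x,a)\<in>space P \<times> UNIV. pith x a / pi0 x a)"
  have Wub: "pith x a / pi0 x a \<le> W" if "x \<in> space P" for x a
    using cSUP_upper[of "(x,a)" "space P \<times> UNIV" "\<lambda>(x,a). pith x a / pi0 x a"] assms(5) that
    by (auto simp: W_def)
  obtain x0 where x0: "x0 \<in> space P" using P.not_empty by blast
  have W0: "0 \<le> W" using Wub[OF x0, of undefined] ptn[OF x0] pos[OF x0] by (smt (verit) divide_nonneg_pos)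
  have rat: "0 \<le> pith x a / pi0 x a" if "x \<in> space P" for x a by (rule divide_nonneg_pos[OF ptn[OF that] pos[OF that]])
  define K where "K = enn2real (min (cond_KL P pith pi0) (rev_cond_KL P pith pi0))"
  define v where "v = (W * sqrt (2*K) + 2) / 2"
  define L where "L = ln (1/\<delta>)"
  define Z where "Z = (\<lambda>(x,a). fr x a * pith x a / pi0 x a)"
  note JF = joint_facts[OF assms(1) assms(2)]
  interpret E: prob_space "joint P pi0" by (rule JF(1))
  have Zm2: "Z \<in> borel_measurable (P \<Otimes>\<^sub>M count_space UNIV)"
    unfolding Z_def by (rule meas2) measurable
  have Zm[measurable]: "Z \<in> borel_measurable (joint P pi0)"
    unfolding measurable_cong_sets[OF JF(3) refl] by (rule Zm2)
  have Zpt: "\<bar>Z (x,a)\<bar> \<le> W \<and> -W \<le> Z (x,a) \<and> Z (x,a) \<le> 0" if "x \<in> space P" for x a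
  proof -
    have e: "Z (x,a) = fr x a * (pith x a / pi0 x a)" by (simp add: Z_def)
    define r where "r = fr x a * (pith x a / pi0 x a)"
    have "\<bar>fr x a\<bar> * \<bar>pith x a / pi0 x a\<bar> \<le> 1 * W"
      using frb[OF that, of a] rat[OF that, of a] Wub[OF that, of a] by (intro mult_mono) (auto simp del: abs_divide)
    hence h1: "\<bar>r\<bar> \<le> W" unfolding r_def abs_mult by simp
    have h2: "r \<le> 0" unfolding r_def using frb[OF that, of a] rat[OF that, of a] by (intro mult_nonpos_nonneg) auto
    have "\<bar>r\<bar> \<le> W \<and> -W \<le> r \<and> r \<le> 0" using h1 h2 by (auto simp: abs_le_iff)
    thus ?thesis unfolding e r_def[symmetric] .
  qed
  have Ebnd: "\<forall>s\<in>space (joint P pi0). \<bar>Z s\<bar> \<le> W"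
  proof
    fix s assume "s \<in> space (joint P pi0)"
    then obtain x a where s: "s = (x,a)" "x \<in> space P" by (auto simp: JF(2))
    show "\<bar>Z s\<bar> \<le> W" using Zpt[OF s(2), of a] s(1) by blast
  qed
  define \<mu> where "\<mu> = integral\<^sup>L (joint P pi0) Z"
  have iZ: "integrable (joint P pi0) Z"
    by (rule E.integrable_const_bound[where B=W]) (use Ebnd in auto)
  have muR: "\<mu> = risk P fr pith"
  proof -
    have "\<mu> = (\<integral>x. (\<Sum>a\<in>UNIV. pi0 x a * Z (x,a)) \<partial>P)"
      unfolding \<mu>_def by (rule JF(4)[OF Zm2, of W]) (use Zpt in blast)
    also have "\<dots> = (\<integral>x. (\<Sum>a\<in>UNIV. pith x a * fr x a) \<partial>P)"
    proof (intro Bochner_Integration.integral_cong refl sum.cong)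
      fix x a assume "x \<in> space P"
      hence "pi0 x a > 0" by (rule pos)
      thus "pi0 x a * Z (x,a) = pith x a * fr x a" by (simp add: Z_def field_simps)
    qed
    finally show ?thesis by (simp add: risk_def)
  qed
  have mu0: "\<mu> \<le> 0"
  proof -
    have "\<mu> \<le> integral\<^sup>L (joint P pi0) (\<lambda>_. 0::real)"
      unfolding \<mu>_def by (rule integral_mono[OF iZ]) (use Zpt in \<open>auto simp: JF(2)\<close>)
    thus ?thesis by simp
  qed
  have up: "\<forall>s\<in>space (joint P pi0). \<mu> - Z s \<le> W"
  proof
    fix s assume "s \<in> space (joint P pi0)"
    then obtain x a where s: "s = (x,a)" "x \<in> space P" by (auto simp: JF(2))
    have "-W \<le> Z s" using Zpt[OF s(2), of a] s(1) by blast
    thus "\<mu> - Z s \<le> W" using mu0 by linarith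
  qed
  define D where "D = (\<lambda>x. \<Sum>a\<in>UNIV. \<bar>pith x a - pi0 x a\<bar>)"
  have Dm[measurable]: "D \<in> borel_measurable P" unfolding D_def by measurable
  have Db: "0 \<le> D x \<and> D x \<le> 2" if "x \<in> space P" for x
  proof -
    have "D x \<le> (\<Sum>a\<in>UNIV. pith x a + pi0 x a)" unfolding D_def
      by (intro sum_mono) (use ptn[OF that] p0n[OF that] in \<open>auto simp: abs_le_iff\<close>)
    also have "\<dots> = 2" using pts[OF that] p0s[OF that] by (simp add: sum.distrib)
    finally show ?thesis by (auto simp: D_def intro: sum_nonneg)
  qed
  have KLx: "(D x)\<^sup>2 / 2 \<le> (\<Sum>a\<in>UNIV. (if pith x a = 0 then 0 else pith x a * ln (pith x a / pi0 x a)))"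
    if "x \<in> space P" for x
    using pinsker_fin[of "pi0 x" "pith x"] pos[OF that] ptn[OF that] pts[OF that] p0s[OF that]
    by (simp add: D_def)
  have KLup: "(\<Sum>a\<in>UNIV. (if pith x a = 0 then 0 else pith x a * ln (pith x a / pi0 x a))) \<le> ln W"
    if "x \<in> space P" for x
  proof -
    have "(\<Sum>a\<in>UNIV. (if pith x a = 0 then 0 else pith x a * ln (pith x a / pi0 x a))) \<le> (\<Sum>a\<in>UNIV. pith x a * ln W)"
    proof (rule sum_mono)
      fix a
      show "(if pith x a = 0 then 0 else pith x a * ln (pith x a / pi0 x a)) \<le> pith x a * ln W"
      proof (cases "pith x a = 0")
        case False
        hence "0 < pith x a / pi0 x a" using ptn[OF that, of a] pos[OF that, of a] by simp
        hence "ln (pith x a / pi0 x a) \<le> ln W" using Wub[OF that, of a] by simp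
        thus ?thesis using False ptn[OF that, of a] by (simp add: mult_left_mono)
      qed simp
    qed
    also have "\<dots> = ln W" using pts[OF that] by (simp add: sum_distrib_right[symmetric])
    finally show ?thesis .
  qed
  have KLfin: "cond_KL P pith pi0 < \<infinity>"
  proof -
    have "cond_KL P pith pi0 \<le> (\<integral>\<^sup>+x. ennreal (ln W) \<partial>P)"
      unfolding cond_KL_def by (intro nn_integral_mono ennreal_leI KLup)
    also have "\<dots> < \<infinity>" by (simp add: P.emeasure_space_1)
    finally show ?thesis .
  qed
  define Q where "Q = (\<integral>x. (D x)\<^sup>2 / 2 \<partial>P)"
  have iD2: "integrable P (\<lambda>x. (D x)\<^sup>2 / 2)"
  proof (rule P.integrable_const_bound[where B=2])
    show "AE x in P. norm ((D x)\<^sup>2 / 2) \<le> 2"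
    proof (rule AE_I2)
      fix x assume x: "x \<in> space P"
      have "(D x)\<^sup>2 \<le> 2\<^sup>2" using Db[OF x] by (intro power_mono) auto
      thus "norm ((D x)\<^sup>2 / 2) \<le> 2" by simp
    qed
  qed simp
  have iD: "integrable P D"
    by (rule P.integrable_const_bound[where B=2]) (use Db in auto)
  have QN: "ennreal Q = (\<integral>\<^sup>+x. ennreal ((D x)\<^sup>2 / 2) \<partial>P)"
    unfolding Q_def by (rule nn_integral_eq_integral[symmetric, OF iD2]) auto
  have Q1: "ennreal Q \<le> cond_KL P pith pi0"
    unfolding QN cond_KL_def by (intro nn_integral_mono ennreal_leI KLx)
  have Q2: "ennreal Q \<le> rev_cond_KL P pith pi0"
    unfolding QN rev_cond_KL_def
  proof (intro nn_integral_mono)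
    fix x assume x: "x \<in> space P"
    show "ennreal ((D x)\<^sup>2 / 2) \<le> (if \<exists>a. pi0 x a > 0 \<and> pith x a = 0 then \<infinity>
      else ennreal (\<Sum>a\<in>UNIV. (if pi0 x a = 0 then 0 else pi0 x a * ln (pi0 x a / pith x a))))"
    proof (cases "\<exists>a. pi0 x a > 0 \<and> pith x a = 0")
      case False
      hence pp: "0 < pith x a" for a using pos[OF x, of a] ptn[OF x, of a] by force
      have "(\<Sum>a\<in>UNIV. \<bar>pi0 x a - pith x a\<bar>)\<^sup>2 \<le> 2 * (\<Sum>a\<in>UNIV. (if pi0 x a = 0 then 0 else pi0 x a * ln (pi0 x a / pith x a)))"
        by (rule pinsker_fin) (use pp p0n[OF x] pts[OF x] p0s[OF x] in auto)
      moreover have "(\<Sum>a\<in>UNIV. \<bar>pi0 x a - pith x a\<bar>) = D x" unfolding D_def by (simp add: abs_minus_commute)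
      ultimately have "(D x)\<^sup>2 / 2 \<le> (\<Sum>a\<in>UNIV. (if pi0 x a = 0 then 0 else pi0 x a * ln (pi0 x a / pith x a)))"
        by simp
      thus ?thesis using False by (simp add: ennreal_leI)
    qed simp
  qed
  define m where "m = min (cond_KL P pith pi0) (rev_cond_KL P pith pi0)"
  have QK: "Q \<le> K"
  proof -
    have "ennreal Q \<le> m" using Q1 Q2 by (simp add: m_def)
    moreover have "m < \<infinity>" using KLfin by (simp add: m_def min.strict_coboundedI1)
    ultimately have "enn2real (ennreal Q) \<le> enn2real m" by (intro enn2real_mono) auto
    moreover have "0 \<le> Q" unfolding Q_def by (rule integral_nonneg_AE) auto
    ultimately show ?thesis by (simp add: K_def m_def)
  qed
  have intD: "(\<integral>x. D x \<partial>P) \<le> sqrt (2 * K)"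
  proof -
    have "0 \<le> P.variance D" by (rule integral_nonneg_AE) auto
    moreover have "P.variance D = (\<integral>x. (D x)\<^sup>2 \<partial>P) - (\<integral>x. D x \<partial>P)\<^sup>2"
      by (rule P.variance_eq[OF iD]) (use integrable_mult_right[OF iD2, of 2] in simp)
    moreover have "(\<integral>x. (D x)\<^sup>2 \<partial>P) = 2 * Q" unfolding Q_def by simp
    ultimately have "(\<integral>x. D x \<partial>P)\<^sup>2 \<le> 2 * K" using QK by linarith
    thus ?thesis by (rule real_le_rsqrt)
  qed
  have chi: "(\<Sum>a\<in>UNIV. pi0 x a * (Z (x,a))\<^sup>2) \<le> 1 + W / 2 * D x" if x: "x \<in> space P" for x
  proof -
    have "(\<Sum>a\<in>UNIV. pi0 x a * (Z (x,a))\<^sup>2) \<le> (\<Sum>a\<in>UNIV. pith x a + W * (\<bar>pith x a - pi0 x a\<bar> + (pith x a - pi0 x a)) / 2)"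
    proof (rule sum_mono)
      fix a
      show "pi0 x a * (Z (x,a))\<^sup>2 \<le> pith x a + W * (\<bar>pith x a - pi0 x a\<bar> + (pith x a - pi0 x a)) / 2"
        unfolding Z_def using chi_term[OF pos[OF x, of a] ptn[OF x, of a] _ _ Wub[OF x, of a]] frb[OF x, of a] by simp
    qed
    also have "\<dots> = 1 + W / 2 * D x"
      using pts[OF x] p0s[OF x]
      by (simp add: D_def sum.distrib sum_subtractf sum_divide_distrib[symmetric] sum_distrib_left[symmetric] algebra_simps)
    finally show ?thesis .
  qed
  have Zm2'[measurable]: "(\<lambda>x. Z (x, a)) \<in> borel_measurable P" for a unfolding Z_def by simp
  have var: "(\<integral>s. (Z s - \<mu>)\<^sup>2 \<partial>joint P pi0) \<le> v"
  proof -
    have Z2b: "\<bar>(Z (x,a))\<^sup>2\<bar> \<le> W\<^sup>2" if "x \<in> space P" for x a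
    proof -
      have "\<bar>Z (x,a)\<bar>\<^sup>2 \<le> W\<^sup>2" using Zpt[OF that, of a] by (intro power_mono) auto
      thus ?thesis by simp
    qed
    have iZ2: "integrable (joint P pi0) (\<lambda>s. (Z s)\<^sup>2)"
    proof (rule E.integrable_const_bound[where B="W\<^sup>2"])
      show "AE s in joint P pi0. norm ((Z s)\<^sup>2) \<le> W\<^sup>2"
        using Z2b by (intro AE_I2) (auto simp: JF(2))
    qed simp
    have "(\<integral>s. (Z s - \<mu>)\<^sup>2 \<partial>joint P pi0) = (\<integral>s. (Z s)\<^sup>2 \<partial>joint P pi0) - \<mu>\<^sup>2"
      unfolding \<mu>_def by (rule E.variance_eq[OF iZ iZ2])
    also have "\<dots> \<le> (\<integral>s. (Z s)\<^sup>2 \<partial>joint P pi0)" by simp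
    also have "(\<integral>s. (Z s)\<^sup>2 \<partial>joint P pi0) = (\<integral>x. (\<Sum>a\<in>UNIV. pi0 x a * (Z (x,a))\<^sup>2) \<partial>P)"
    proof (rule JF(4)[where g="\<lambda>s. (Z s)\<^sup>2" and B="W\<^sup>2", simplified])
      show "(\<lambda>s. (Z s)\<^sup>2) \<in> borel_measurable (P \<Otimes>\<^sub>M count_space UNIV)" using Zm2 by measurable
      show "\<forall>x\<in>space P. \<forall>a. (Z (x, a))\<^sup>2 \<le> W\<^sup>2" using Z2b by auto
    qed
    also have "\<dots> \<le> (\<integral>x. 1 + W / 2 * D x \<partial>P)"
    proof (rule integral_mono)
      show "integrable P (\<lambda>x. 1 + W / 2 * D x)" using iD by simp
      show "integrable P (\<lambda>x. \<Sum>a\<in>UNIV. pi0 x a * (Z (x,a))\<^sup>2)"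
      proof (rule P.integrable_const_bound[where B="1 + W"])
        show "AE x in P. norm (\<Sum>a\<in>UNIV. pi0 x a * (Z (x,a))\<^sup>2) \<le> 1 + W"
        proof (rule AE_I2)
          fix x assume x: "x \<in> space P"
          have "0 \<le> (\<Sum>a\<in>UNIV. pi0 x a * (Z (x,a))\<^sup>2)" using p0n[OF x] by (intro sum_nonneg) simp
          moreover have "W / 2 * D x \<le> W / 2 * 2" using Db[OF x] W0 by (intro mult_left_mono) auto
          ultimately show "norm (\<Sum>a\<in>UNIV. pi0 x a * (Z (x,a))\<^sup>2) \<le> 1 + W" using chi[OF x] by simp
        qed
      qed measurable
      show "\<And>x. x \<in> space P \<Longrightarrow> (\<Sum>a\<in>UNIV. pi0 x a * (Z (x,a))\<^sup>2) \<le> 1 + W / 2 * D x" by (rule chi)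
    qed
    also have "\<dots> = 1 + W / 2 * (\<integral>x. D x \<partial>P)" using iD by (simp add: P.prob_space)
    also have "\<dots> \<le> 1 + W / 2 * sqrt (2 * K)" using intD W0 by (intro add_left_mono mult_left_mono) auto
    also have "\<dots> = v" by (simp add: v_def field_simps)
    finally show ?thesis .
  qed
  have K0: "0 \<le> K" by (simp add: K_def)
  have "0 \<le> W * sqrt (2*K)" using W0 K0 by simp
  hence v0: "0 < v" by (simp add: v_def)
  have L0: "0 < L" using assms(9,10) by (simp add: L_def)
  have n0: "1 \<le> n" by fact
  note bern = bernstein_PiM[OF JF(1) Zm Ebnd up \<mu>_def W0 var v0 L0 n0]
  let ?M = "PiM {..<n} (\<lambda>_. joint P pi0)"
  interpret M: prob_space ?M by (rule prob_space_PiM) (rule JF(1))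
  define G where "G = {S \<in> space ?M. risk P fr pith \<le> (1 / real n) * (\<Sum>i<n. Z (S i)) + W * L / (3 * real n) + sqrt ((W * sqrt (2 * K) + 2) * L / real n)}"
  define F where "F = {S \<in> space ?M. sqrt (2 * real n * v * L) + W * L / 3 \<le> (\<Sum>i<n. \<mu> - Z (S i))}"
  have Gm: "G \<in> sets ?M" unfolding G_def by measurable
  have Fm: "F \<in> sets ?M" unfolding F_def by measurable
  have sub: "space ?M - F \<subseteq> G"
  proof
    fix S assume S: "S \<in> space ?M - F"
    define e where "e = (\<Sum>i<n. Z (S i))"
    define sq where "sq = sqrt ((W * sqrt (2 * K) + 2) * L / real n)"
    have "\<not> (sqrt (2 * real n * v * L) + W * L / 3 \<le> real n * \<mu> - e)" using S by (simp add: F_def e_def sum_subtractf)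
    hence lt: "real n * \<mu> - e < sqrt (2 * real n * v * L) + W * L / 3" by simp
    have X0: "0 \<le> (W * sqrt (2*K) + 2) * L" using W0 L0 K0 by simp
    have vv: "2 * real n * v * L = real n * ((W * sqrt (2*K) + 2) * L)" by (simp add: v_def)
    have sqn: "real n * sq = sqrt (2 * real n * v * L)"
      unfolding sq_def vv using sqrt_n_aux[OF _ X0, of n] n0 by simp
    have "real n * risk P fr pith \<le> e + W * L / 3 + real n * sq" using lt sqn muR by simp
    hence "risk P fr pith \<le> (1 / real n) * e + W * L / (3 * real n) + sq" using n0 by (simp add: field_simps)
    thus "S \<in> G" using S by (simp add: G_def e_def sq_def)
  qed
  have "measure ?M F \<le> exp (-L)" using bern by (simp add: F_def)
  also have "exp (-L) = \<delta>" using assms(9) by (simp add: L_def ln_div)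
  finally have F1: "measure ?M F \<le> \<delta>" .
  have "1 - \<delta> \<le> measure ?M (space ?M - F)" using F1 M.prob_compl[OF Fm] by simp
  also have "\<dots> \<le> measure ?M G" by (rule M.finite_measure_mono[OF sub Gm])
  finally have final: "1 - \<delta> \<le> measure ?M G" .
  show ?thesis using final by (simp add: G_def W_def K_def L_def emp_risk_def Z_def split_beta)
qed

end
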